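(* Let $A$ be a T-brace and let $a\in\zeta_2(\star,A)$ be an element of finite order in $(A,+)$. Suppose that the torsion subgroup of the additive group of $\zeta(\star,A)$ is a $p$-group for some prime $p$. If the additive group of $\zeta_2(\star,A)$ is not periodic, then the additive order of $a\star a$ is at most $p$ (i.e. $p(a\star a)=0$).
   Context: A (left) brace is a set $A$ with two operations $+$ and $\cdot$ such that $(A,+)$ is an abelian group, $(A,\cdot)$ is a group, and $a(b+c)=ab+ac-a$ for all $a,b,c\in A$. Put $a\star b=ab-a-b$. A subbrace is a subset which is a subgroup of both $(A,+)$ and $(A,\cdot)$; a subbrace $L$ is an ideal if $a\star z, z\star a\in L$ for all $a\in A$, $z\in L$, and then the quotient brace $A/L$ is defined. $A$ is a T-brace if whenever $I$ is an ideal of $J$ and $J$ is an ideal of $A$, then $I$ is an ideal of $A$. The $\star$-center is $\zeta(\star,A)=\{a: a\star x=x\star a=0\ \forall x\}$; $\zeta_2(\star,A)$ is given by $\zeta_2(\star,A)/\zeta(\star,A)=\zeta(\star,A/\zeta(\star,A))$. *)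

theory Defs
  imports "HOL-Computational_Algebra.Primes"
begin

text \<open>A (left) brace on the whole type 'a: the additive abelian group is the
  type-class structure of 'a, the multiplication is the function mul.\<close>

definition brace_one :: "('a \<Rightarrow> 'a \<Rightarrow> 'a) \<Rightarrow> 'a" where
  "brace_one mul = (THE e. \<forall>a. mul e a = a \<and> mul a e = a)"

definition is_brace :: "('a::ab_group_add \<Rightarrow> 'a \<Rightarrow> 'a) \<Rightarrow> bool" where
  "is_brace mul \<longleftrightarrow>
     (\<forall>a b c. mul (mul a b) c = mul a (mul b c)) \<and>
     (\<exists>e. (\<forall>a. mul e a = a \<and> mul a e = a) \<and> (\<forall>a. \<exists>b. mul a b = e \<and> mul b a = e)) \<and>
     (\<forall>a b c. mul a (b + c) = mul a b + mul a c - a)"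

definition bstar :: "('a::ab_group_add \<Rightarrow> 'a \<Rightarrow> 'a) \<Rightarrow> 'a \<Rightarrow> 'a \<Rightarrow> 'a" where
  "bstar mul a b = mul a b - a - b"

definition subbrace :: "('a::ab_group_add \<Rightarrow> 'a \<Rightarrow> 'a) \<Rightarrow> 'a set \<Rightarrow> bool" where
  "subbrace mul S \<longleftrightarrow>
     0 \<in> S \<and> (\<forall>a\<in>S. \<forall>b\<in>S. a + b \<in> S) \<and> (\<forall>a\<in>S. - a \<in> S) \<and>
     brace_one mul \<in> S \<and> (\<forall>a\<in>S. \<forall>b\<in>S. mul a b \<in> S) \<and>
     (\<forall>a\<in>S. \<forall>b. mul a b = brace_one mul \<longrightarrow> b \<in> S)"

text \<open>I is an ideal of the subbrace J (J = UNIV: ideal of A).\<close>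
definition ideal_of :: "('a::ab_group_add \<Rightarrow> 'a \<Rightarrow> 'a) \<Rightarrow> 'a set \<Rightarrow> 'a set \<Rightarrow> bool" where
  "ideal_of mul J I \<longleftrightarrow> subbrace mul I \<and> I \<subseteq> J \<and>
     (\<forall>a\<in>J. \<forall>z\<in>I. bstar mul a z \<in> I \<and> bstar mul z a \<in> I)"

definition T_brace :: "('a::ab_group_add \<Rightarrow> 'a \<Rightarrow> 'a) \<Rightarrow> bool" where
  "T_brace mul \<longleftrightarrow> is_brace mul \<and>
     (\<forall>I J. ideal_of mul UNIV J \<and> ideal_of mul J I \<longrightarrow> ideal_of mul UNIV I)"

definition star_center :: "('a::ab_group_add \<Rightarrow> 'a \<Rightarrow> 'a) \<Rightarrow> 'a set" where
  "star_center mul = {a. \<forall>x. bstar mul a x = 0 \<and> bstar mul x a = 0}"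

text \<open>Second star-center, with the quotient A/zeta unfolded: a + zeta lies in the
  star-center of A/zeta iff a*x and x*a lie in zeta for all x.\<close>
definition star_center2 :: "('a::ab_group_add \<Rightarrow> 'a \<Rightarrow> 'a) \<Rightarrow> 'a set" where
  "star_center2 mul = {a. \<forall>x. bstar mul a x \<in> star_center mul \<and> bstar mul x a \<in> star_center mul}"

definition nsm :: "nat \<Rightarrow> 'a::ab_group_add \<Rightarrow> 'a" where
  "nsm n x = ((+) x ^^ n) 0"

definition add_finite_order :: "'a::ab_group_add \<Rightarrow> bool" where
  "add_finite_order x \<longleftrightarrow> (\<exists>n>0. nsm n x = 0)"

end

theory Submission
  imports Defs
begin



lemma nsm_0[simp]: "nsm 0 x = 0" by (simp add: nsm_def)
lemma nsm_Suc: "nsm (Suc n) x = x + nsm n x" by (simp add: nsm_def)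
lemma nsm_add: "nsm (m + n) x = nsm m x + nsm n x"
  by (induction m) (simp_all add: nsm_Suc algebra_simps)
lemma nsm_mult: "nsm (m * n) x = nsm m (nsm n x)"
  by (induction m) (simp_all add: nsm_Suc nsm_add)
lemma nsm_plus: "nsm n (x + y) = nsm n x + nsm n y"
  by (induction n) (simp_all add: nsm_Suc algebra_simps)
lemma nsm_zero[simp]: "nsm n 0 = 0"
  by (induction n) (simp_all add: nsm_Suc)
lemma nsm_neg: "nsm n (- x) = - nsm n x"
proof -
  have "nsm n (- x) + nsm n x = 0" by (simp add: nsm_plus[symmetric])
  then show ?thesis by (simp add: eq_neg_iff_add_eq_0)
qed
lemma nsm_diff: "nsm n (x - y) = nsm n x - nsm n y"
  using nsm_plus[of n x "-y"] nsm_neg[of n y] by simp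
lemma nsm_1[simp]: "nsm 1 x = x" by (simp add: nsm_def)
lemma nsm_Suc0[simp]: "nsm (Suc 0) x = x" by (simp add: nsm_def)
lemma nsm_comm: "nsm m (nsm n x) = nsm n (nsm m x)"
  by (metis mult.commute nsm_mult)

definition zsm :: "int \<Rightarrow> 'a::ab_group_add \<Rightarrow> 'a" where
  "zsm j x = nsm (nat j) x - nsm (nat (- j)) x"

lemma zsm_eq: assumes "j = int a - int b" shows "zsm j x = nsm a x - nsm b x"
proof -
  have "nat j + b = a + nat (- j)" using assms by linarith
  then have "nsm (nat j + b) x = nsm (a + nat (- j)) x" by simp
  then have "nsm (nat j) x + nsm b x = nsm a x + nsm (nat (- j)) x" by (simp add: nsm_add)
  then show ?thesis unfolding zsm_def by (simp add: algebra_simps)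
qed

lemma zsm_int[simp]: "zsm (int n) x = nsm n x" by (simp add: zsm_def)
lemma zsm_0[simp]: "zsm 0 x = 0" by (simp add: zsm_def)
lemma zsm_1[simp]: "zsm 1 x = x" by (simp add: zsm_def nsm_Suc)
lemma zsm_add: "zsm (i + j) x = zsm i x + zsm j x"
proof -
  have "i + j = int (nat i + nat j) - int (nat (-i) + nat (-j))" by linarith
  then have "zsm (i + j) x = nsm (nat i + nat j) x - nsm (nat (-i) + nat (-j)) x" by (rule zsm_eq)
  then show ?thesis by (simp add: zsm_def nsm_add algebra_simps)
qed
lemma zsm_uminus: "zsm (- j) x = - zsm j x"
  by (simp add: zsm_def)
lemma zsm_mult: "zsm (i * j) x = zsm i (zsm j x)"
proof -
  define a b c d where "a = nat i" "b = nat (-i)" "c = nat j" "d = nat (-j)"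
  have "i * j = int (a*c + b*d) - int (a*d + b*c)"
    unfolding a_b_c_d_def by (cases "i \<ge> 0"; cases "j \<ge> 0") (simp_all add: algebra_simps)
  then have "zsm (i * j) x = nsm (a*c + b*d) x - nsm (a*d + b*c) x" by (rule zsm_eq)
  moreover have "zsm i (zsm j x) = nsm a (nsm c x - nsm d x) - nsm b (nsm c x - nsm d x)"
    unfolding a_b_c_d_def zsm_def by simp
  ultimately show ?thesis apply (simp add: nsm_add nsm_mult nsm_diff algebra_simps)
    by (metis add_left_cancel)
qed
lemma zsm_plus: "zsm j (x + y) = zsm j x + zsm j y"
  by (simp add: zsm_def nsm_plus algebra_simps)
lemma zsm_neg: "zsm j (- x) = - zsm j x"
  by (simp add: zsm_def nsm_neg algebra_simps)
lemma zsm_zero[simp]: "zsm j 0 = 0" by (simp add: zsm_def)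

lemma additive_zsm:
  assumes add: "\<And>u v. P v \<Longrightarrow> f (u + v) = f u + f v"
    and P: "\<And>n. P (nsm n x)"
  shows "f (zsm j x) = zsm j (f x)"
proof -
  have n: "f (nsm n x) = nsm n (f x)" for n
  proof (induction n)
    case 0
    have P0: "P 0" using P[of 0] by simp
    have "f (0 + 0) = f 0 + f 0" using add[OF P0] by blast
    then show ?case by simp
  next
    case (Suc n)
    then show ?case using add[of "nsm n x" x] P[of n] by (simp add: nsm_Suc add.commute)
  qed
  have "f (zsm j x + nsm (nat (-j)) x) = f (zsm j x) + f (nsm (nat (-j)) x)" using add P by blast
  moreover have "zsm j x + nsm (nat (-j)) x = nsm (nat j) x" by (simp add: zsm_def)
  ultimately show ?thesis by (simp add: n zsm_def algebra_simps)
qed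



locale brc = fixes mul :: "'a::ab_group_add \<Rightarrow> 'a \<Rightarrow> 'a" assumes br: "is_brace mul"
begin

abbreviation st where "st x y \<equiv> bstar mul x y"
abbreviation Z where "Z \<equiv> star_center mul"
abbreviation Z2 where "Z2 \<equiv> star_center2 mul"

lemma assoc: "mul (mul a b) c = mul a (mul b c)" using br unfolding is_brace_def by blast
lemma distr: "mul a (b + c) = mul a b + mul a c - a" using br unfolding is_brace_def by blast

lemma mul_0r[simp]: "mul x 0 = x"
  using distr[of x 0 0] by simp

lemma mul_0l[simp]: "mul 0 x = x"
proof -
  obtain e where e: "\<forall>a. mul e a = a \<and> mul a e = a" using br unfolding is_brace_def by blast
  have "mul e 0 = 0" using e by blast
  then have "e = 0" by simp
  then show ?thesis using e by simp
qed

lemma one_0: "brace_one mul = 0"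
  unfolding brace_one_def
proof (rule the_equality)
  show "\<forall>a. mul 0 a = a \<and> mul a 0 = a" by simp
  fix e assume "\<forall>a. mul e a = a \<and> mul a e = a"
  then have "mul e 0 = 0" by blast
  then show "e = 0" by simp
qed

lemma mul_st: "mul x y = x + y + st x y" by (simp add: bstar_def)
lemma st_add2: "st x (y + z) = st x y + st x z" by (simp add: bstar_def distr)
lemma st_0l[simp]: "st 0 x = 0" by (simp add: bstar_def)
lemma st_0r[simp]: "st x 0 = 0" by (simp add: bstar_def)

lemma st_assoc: "st (mul u v) w = st u (st v w) + st v w + st u w"
proof -
  have "mul u (mul v w) = mul u ((st v w + v) + w)" by (simp add: mul_st algebra_simps)
  also have "\<dots> = mul u (st v w) + mul u v + mul u w - u - u" by (simp add: distr)
  finally have "mul (mul u v) w = mul u (st v w) + mul u v + mul u w - u - u" by (simp add: assoc)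
  then show ?thesis by (simp add: bstar_def algebra_simps)
qed

lemma inZ: "z \<in> Z \<longleftrightarrow> (\<forall>x. st x z = 0 \<and> st z x = 0)" by (auto simp: star_center_def)
lemma inZ2: "z \<in> Z2 \<longleftrightarrow> (\<forall>x. st z x \<in> Z \<and> st x z \<in> Z)" by (simp add: star_center2_def)

lemma F3: assumes "z \<in> Z" shows "st (y + z) x = st y x"
proof -
  have "mul y z = y + z" using assms by (simp add: mul_st inZ)
  moreover have "st (mul y z) x = st y x" using assms by (simp add: st_assoc inZ)
  ultimately show ?thesis by simp
qed

lemma F4: assumes "b \<in> Z2" shows "st (y + b) x = st y x + st b x"
proof -
  have 1: "st (mul y b) x = st b x + st y x" using assms by (simp add: st_assoc inZ inZ2)
  have "st (mul y b) x = st ((y + b) + st y b) x" by (simp add: mul_st)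
  also have "\<dots> = st (y + b) x" using assms by (intro F3) (simp add: inZ2)
  finally show ?thesis using 1 by (simp add: algebra_simps)
qed

lemma st_neg2: "st x (- y) = - st x y"
  using st_add2[of x "-y" y] by (simp add: eq_neg_iff_add_eq_0)

lemma st_neg1: assumes "b \<in> Z2" shows "st (- b) x = - st b x"
  using F4[OF assms, of "-b" x] by (simp add: eq_neg_iff_add_eq_0)

lemma Z_0: "0 \<in> Z" by (simp add: inZ)
lemma Z_add: "u \<in> Z \<Longrightarrow> v \<in> Z \<Longrightarrow> u + v \<in> Z"
  by (simp add: inZ st_add2 F3)
lemma Z_Z2: "u \<in> Z \<Longrightarrow> u \<in> Z2" by (simp add: inZ inZ2 Z_0)
lemma Z_neg: "u \<in> Z \<Longrightarrow> - u \<in> Z"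
  using st_neg1[OF Z_Z2] by (simp add: inZ st_neg2)
lemma Z2_0: "0 \<in> Z2" by (simp add: Z_Z2 Z_0)
lemma Z2_add: "u \<in> Z2 \<Longrightarrow> v \<in> Z2 \<Longrightarrow> u + v \<in> Z2"
  by (simp add: inZ2 st_add2 F4 Z_add)
lemma Z2_neg: "u \<in> Z2 \<Longrightarrow> - u \<in> Z2"
  by (simp add: inZ2 st_neg1 st_neg2 Z_neg)
lemma Z_nsm: "u \<in> Z \<Longrightarrow> nsm n u \<in> Z"
  by (induction n) (simp_all add: nsm_Suc Z_0 Z_add)
lemma Z2_nsm: "u \<in> Z2 \<Longrightarrow> nsm n u \<in> Z2"
  by (induction n) (simp_all add: nsm_Suc Z2_0 Z2_add)
lemma Z_zsm: "u \<in> Z \<Longrightarrow> zsm j u \<in> Z"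
  unfolding zsm_def using Z_nsm Z_add Z_neg by (metis diff_conv_add_uminus)
lemma Z2_zsm: "u \<in> Z2 \<Longrightarrow> zsm j u \<in> Z2"
  unfolding zsm_def using Z2_nsm Z2_add Z2_neg by (metis diff_conv_add_uminus)

lemma st_zsm2: "st x (zsm j y) = zsm j (st x y)"
  by (rule additive_zsm[where P="\<lambda>_. True"]) (simp_all add: st_add2)
lemma st_zsm1: assumes "y \<in> Z2" shows "st (zsm j y) x = zsm j (st y x)"
  by (rule additive_zsm[where P="\<lambda>v. v \<in> Z2"]) (simp_all add: F4 Z2_nsm assms)
lemma st_nsm2: "st x (nsm n y) = nsm n (st x y)"
  using st_zsm2[of x "int n" y] by simp
lemma st_nsm1: assumes "y \<in> Z2" shows "st (nsm n y) x = nsm n (st y x)"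
  using st_zsm1[OF assms, of "int n" x] by simp

end


context brc begin
lemma subbrace_I:
  assumes "S \<subseteq> Z2" "0 \<in> S" "\<And>u v. u \<in> S \<Longrightarrow> v \<in> S \<Longrightarrow> u + v \<in> S"
    "\<And>u. u \<in> S \<Longrightarrow> - u \<in> S" "\<And>u v. u \<in> S \<Longrightarrow> v \<in> S \<Longrightarrow> st u v \<in> S"
  shows "subbrace mul S"
  unfolding subbrace_def one_0
proof (intro conjI ballI allI impI)
  fix u v assume "u \<in> S" "v \<in> S"
  then show "mul u v \<in> S" using assms by (simp add: mul_st)
next
  fix u w assume u: "u \<in> S" and w: "mul u w = 0"
  have uZ2: "u \<in> Z2" using u assms(1) by blast
  have 0: "u + w + st u w = 0" using w by (simp add: mul_st)
  have sZ: "st u w \<in> Z" using uZ2 by (simp add: inZ2)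
  have "st u (u + w + st u w) = 0" using 0 by simp
  then have "st u u + st u w = 0" using sZ by (simp add: st_add2 inZ)
  then have s: "st u w = - st u u" by (simp add: minus_unique)
  have "w = (u + w + st u w) - u - st u w" by simp
  also have "\<dots> = - u - st u w" using 0 by simp
  finally have "w = - u + st u u" using s by simp
  moreover have "- u + st u u \<in> S" using u assms(3,4,5) by blast
  ultimately show "w \<in> S" by simp
qed (use assms in auto)

lemma ideal_UNIV_I:
  assumes "Z \<subseteq> S" "S \<subseteq> Z2" "0 \<in> S" "\<And>u v. u \<in> S \<Longrightarrow> v \<in> S \<Longrightarrow> u + v \<in> S"
    "\<And>u. u \<in> S \<Longrightarrow> - u \<in> S"
  shows "ideal_of mul UNIV S"
proof -
  have st: "st x v \<in> S \<and> st v x \<in> S" if "v \<in> S" for x v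
  proof -
    have "v \<in> Z2" using that assms(2) by blast
    then have "st x v \<in> Z \<and> st v x \<in> Z" by (simp add: inZ2)
    then show ?thesis using assms(1) by blast
  qed
  have sb: "subbrace mul S"
    by (rule subbrace_I[OF assms(2,3)]) (simp_all add: assms(4,5) st)
  show ?thesis unfolding ideal_of_def using sb st by blast
qed

end



lemma zsm_torsion: assumes "zsm L b = 0" "L \<noteq> 0" shows "add_finite_order b"
proof (cases "L > 0")
  case True
  then have "nsm (nat L) b = 0" using assms by (simp add: zsm_def)
  then show ?thesis using True unfolding add_finite_order_def by (intro exI[of _ "nat L"]) simp
next
  case False
  then have "nsm (nat (-L)) b = 0" using assms by (simp add: zsm_def)
  then show ?thesis using False assms(2) unfolding add_finite_order_def by (intro exI[of _ "nat (-L)"]) simp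
qed

context brc begin

lemma T_key:
  assumes T: "\<forall>I J. ideal_of mul UNIV J \<and> ideal_of mul J I \<longrightarrow> ideal_of mul UNIV I"
    and y: "y \<in> Z2" and F: "F \<subseteq> Z" "0 \<in> F" "\<And>u v. u \<in> F \<Longrightarrow> v \<in> F \<Longrightarrow> u + v \<in> F"
    "\<And>u j. u \<in> F \<Longrightarrow> zsm j u \<in> F"
    and yy: "st y y \<in> F"
  shows "\<exists>j f. st x y = zsm j y + f \<and> f \<in> F"
proof -
  define J where "J = {zsm j y + z | j z. z \<in> Z}"
  define I where "I = {zsm j y + f | j f. f \<in> F}"
  have Fneg: "- u \<in> F" if "u \<in> F" for u
    using F(4)[OF that, of "-1"] by (simp add: zsm_uminus)
  have sumeq: "zsm j y + z + (zsm j' y + z') = zsm (j + j') y + (z + z')" for j j' z z'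
    by (simp add: zsm_add algebra_simps)
  have negeq: "- zsm j y - z = zsm (- j) y + (- z)" for j z
    by (simp add: zsm_uminus)
  have JZ2: "J \<subseteq> Z2" unfolding J_def using y Z2_add Z2_zsm Z_Z2 by blast
  have J1: "ideal_of mul UNIV J"
  proof (rule ideal_UNIV_I)
    show "Z \<subseteq> J" unfolding J_def by (force intro: exI[of _ 0])
    show "J \<subseteq> Z2" by (rule JZ2)
    show "0 \<in> J" unfolding J_def using Z_0 by (force intro: exI[of _ 0])
    show "u + v \<in> J" if "u \<in> J" "v \<in> J" for u v
      using that unfolding J_def by (auto simp: sumeq) (metis Z_add)
    show "- u \<in> J" if "u \<in> J" for u
      using that unfolding J_def by (auto simp: negeq) (metis Z_neg diff_conv_add_uminus)
  qed
  have IJ: "I \<subseteq> J" unfolding I_def J_def using F(1) by blast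
  have stF: "st u v \<in> F \<and> st v u \<in> F" if uJ: "u \<in> J" and vI: "v \<in> I" for u v
  proof -
    obtain j z where u: "u = zsm j y + z" "z \<in> Z" using uJ unfolding J_def by blast
    obtain j' f where v: "v = zsm j' y + f" "f \<in> F" using vI unfolding I_def by blast
    have fZ: "f \<in> Z" using v F(1) by blast
    have uy: "st u y = zsm j (st y y)" using u by (simp add: F3 st_zsm1 y)
    have "st u v = st u (zsm j' y) + st u f" using v by (simp add: st_add2)
    also have "\<dots> = zsm j' (zsm j (st y y))" using fZ uy by (simp add: st_zsm2 inZ)
    finally have 1: "st u v = zsm j' (zsm j (st y y))" .
    have "st v u = st (zsm j' y) u" using v fZ by (simp add: F3)
    also have "\<dots> = zsm j' (st y (zsm j y) + st y z)" using u y by (simp add: st_zsm1 st_add2 zsm_plus)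
    also have "\<dots> = zsm j' (zsm j (st y y))" using u by (simp add: st_zsm2 inZ)
    finally have 2: "st v u = zsm j' (zsm j (st y y))" .
    show ?thesis using 1 2 F(4) yy by simp
  qed
  have FI: "w \<in> I" if "w \<in> F" for w
    using that unfolding I_def by (force intro: exI[of _ 0])
  have J2: "ideal_of mul J I"
    unfolding ideal_of_def
  proof (intro conjI subbrace_I ballI IJ)
    show "I \<subseteq> Z2" using IJ JZ2 by blast
    show "0 \<in> I" using FI F(2) by blast
    show "u + v \<in> I" if "u \<in> I" "v \<in> I" for u v
      using that unfolding I_def by (auto simp: sumeq) (metis F(3))
    show "- u \<in> I" if "u \<in> I" for u
      using that unfolding I_def by (auto simp: negeq) (metis Fneg diff_conv_add_uminus)
    show "st u v \<in> I" if "u \<in> I" "v \<in> I" for u v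
      using that IJ stF FI by blast
    show "st u v \<in> I" if "u \<in> J" "v \<in> I" for u v
      using that stF FI by blast
    show "st v u \<in> I" if "u \<in> J" "v \<in> I" for u v
      using that stF FI by blast
  qed
  have "ideal_of mul UNIV I" using T J1 J2 by blast
  moreover have "y \<in> I" unfolding I_def using F(2) by (force intro: exI[of _ 1])
  ultimately have "st x y \<in> I" unfolding ideal_of_def by blast
  then show ?thesis unfolding I_def by blast
qed

end



theorem corollary4p6:
  fixes mul :: "'a::ab_group_add \<Rightarrow> 'a \<Rightarrow> 'a" and a :: 'a and p :: nat
  assumes "T_brace mul"
    and "a \<in> star_center2 mul"
    and "add_finite_order a"
    and "prime p"
    and "\<forall>x\<in>star_center mul. add_finite_order x \<longrightarrow> (\<exists>k. nsm (p ^ k) x = 0)"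
    and "\<not> (\<forall>x\<in>star_center2 mul. add_finite_order x)"
  shows "nsm p (bstar mul a a) = 0"
proof -
  interpret brc mul using assms(1) unfolding T_brace_def by unfold_locales blast
  have T: "\<forall>I J. ideal_of mul UNIV J \<and> ideal_of mul J I \<longrightarrow> ideal_of mul UNIV I"
    using assms(1) unfolding T_brace_def by blast
  have aZ2: "a \<in> Z2" by (rule assms(2))
  obtain n where n: "n > 0" "nsm n a = 0" using assms(3) unfolding add_finite_order_def by blast
  obtain b0 where b0: "b0 \<in> Z2" "\<not> add_finite_order b0" using assms(6) by blast
  obtain b m where b: "b \<in> Z2" "\<not> add_finite_order b" and m: "m > 0" "nsm m (st b b) = 0"
  proof (cases "add_finite_order (st b0 b0)")
    case True
    then obtain m where "m > 0" "nsm m (st b0 b0) = 0" unfolding add_finite_order_def by blast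
    then show ?thesis using that b0 by blast
  next
    case False
    have bZ: "st b0 b0 \<in> Z" using b0(1) by (simp add: inZ2)
    then have "st (st b0 b0) (st b0 b0) = 0" by (simp add: inZ)
    then show ?thesis using that[of "st b0 b0" 1] False bZ Z_Z2 by simp
  qed
  define c where "c = st a a"
  have cZ: "c \<in> Z" using aZ2 unfolding c_def by (simp add: inZ2)
  have nc: "nsm n c = 0" unfolding c_def using st_nsm1[OF aZ2, of n a] n by simp
  have "add_finite_order c" unfolding add_finite_order_def using n nc by blast
  then obtain k where k: "nsm (p ^ k) c = 0" using assms(5) cZ by blast
  have p0: "p > 0" using assms(4) prime_gt_0_nat by blast
  show ?thesis
  proof (rule ccontr)
    assume pc: "nsm p (st a a) \<noteq> 0"
    define P where "P s = (nsm (p ^ s) (nsm p c) = 0)" for s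
    have "P k" unfolding P_def using k by (simp add: nsm_comm[of "p^k"])
    moreover have "\<not> P 0" unfolding P_def using pc c_def by simp
    ultimately obtain s where s: "\<not> P s" "P (Suc s)" using ex_least_nat_less[of P k] by blast
    define K where "K = p ^ s"
    have K0: "K > 0" unfolding K_def using p0 by simp
    have K1: "nsm K (nsm p c) \<noteq> 0" using s(1) unfolding P_def K_def .
    have "nsm K (nsm p (nsm p c)) = nsm (p ^ Suc s) (nsm p c)" unfolding K_def
      by (simp add: nsm_mult[symmetric] ac_simps)
    then have K2: "nsm K (nsm p (nsm p c)) = 0" using s(2) unfolding P_def by simp
    define F where "F = {f \<in> Z. nsm K f = 0}"
    have FZ: "F \<subseteq> Z" unfolding F_def by blast
    have F0: "0 \<in> F" unfolding F_def by (simp add: Z_0)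
    have Fadd: "u + v \<in> F" if "u \<in> F" "v \<in> F" for u v
      using that unfolding F_def by (simp add: Z_add nsm_plus)
    have Fzsm: "zsm j u \<in> F" if "u \<in> F" for u j
    proof -
      have "nsm K (zsm j u) = zsm (int K * j) u" by (simp add: zsm_mult)
      also have "\<dots> = zsm j (zsm (int K) u)" by (simp only: zsm_mult[symmetric] mult.commute)
      also have "\<dots> = zsm j (nsm K u)" by simp
      finally show ?thesis using that unfolding F_def by (simp add: Z_zsm)
    qed
    define N where "N = m * n"
    define y where "y = nsm p a + nsm N b"
    have yZ2: "y \<in> Z2" unfolding y_def using aZ2 b by (simp add: Z2_add Z2_nsm)
    have NbZ2: "nsm N b \<in> Z2" using b by (simp add: Z2_nsm)
    have paZ2: "nsm p a \<in> Z2" using aZ2 by (simp add: Z2_nsm)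
    have ab: "nsm N (st a b) = 0"
    proof -
      have "nsm n (st a b) = 0" using st_nsm1[OF aZ2, of n b] n by simp
      then show ?thesis unfolding N_def by (simp add: nsm_mult)
    qed
    have ba: "nsm N (st b a) = 0"
    proof -
      have "nsm n (st b a) = 0" using st_nsm2[of b n a] n by simp
      then show ?thesis unfolding N_def by (simp add: nsm_mult)
    qed
    have bb: "nsm N (st b b) = 0" unfolding N_def using m by (simp add: nsm_mult nsm_comm[of m])
    have ay: "st a y = nsm p c" unfolding y_def c_def
      using ab by (simp add: st_add2 st_nsm2)
    have by': "st b y = nsm p (st b a)" unfolding y_def
      using bb by (simp add: st_add2 st_nsm2)
    have "st y y = st (nsm p a) y + st (nsm N b) y" unfolding y_def[of] 
      using F4[OF NbZ2, of "nsm p a" y] by (simp add: y_def)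
    also have "\<dots> = nsm p (st a y) + nsm N (st b y)" using aZ2 b by (simp add: st_nsm1)
    also have "\<dots> = nsm p (nsm p c)" using ay by' ba by (simp add: nsm_comm[of N])
    finally have yy: "st y y = nsm p (nsm p c)" .
    have yyF: "st y y \<in> F" unfolding F_def using yy K2 cZ by (simp add: Z_nsm)
    obtain j f where jf: "st a y = zsm j y + f" "f \<in> F"
      using T_key[OF T yZ2 FZ F0 Fadd Fzsm yyF, of a] by blast
    have j0: "j = 0"
    proof (rule ccontr)
      assume j: "j \<noteq> 0"
      have fK: "nsm K f = 0" using jf(2) unfolding F_def by blast
      have "zsm j y = nsm p c - f" using jf(1) ay by (simp add: algebra_simps)
      then have "nsm n (nsm K (zsm j y)) = nsm n (nsm K (nsm p c)) - nsm n (nsm K f)"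
        by (simp add: nsm_diff)
      also have "\<dots> = 0"
      proof -
        have "nsm n (nsm K (nsm p c)) = nsm K (nsm p (nsm n c))"
          by (simp add: nsm_mult[symmetric] ac_simps)
        then show ?thesis using fK nc by simp
      qed
      finally have "nsm n (nsm K (zsm j y)) = 0" .
      then have z1: "zsm (int n * int K * j) y = 0" by (simp add: zsm_mult)
      have "zsm (int n * int K * j) (nsm p a) = zsm (int n * int K * j) (zsm (int p) a)" by simp
      also have "\<dots> = zsm (int K * j * int p) (zsm (int n) a)"
        by (simp only: zsm_mult[symmetric]) (simp add: ac_simps)
      also have "\<dots> = zsm (int K * j * int p) (nsm n a)" by simp
      finally have "zsm (int n * int K * j) (nsm p a) = zsm (int K * j * int p) (nsm n a)" .
      then have "zsm (int n * int K * j) (nsm p a) = 0" using n by simp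
      then have "zsm (int n * int K * j) (nsm N b) = 0" using z1 unfolding y_def by (simp add: zsm_plus)
      then have "zsm (int n * int K * j * int N) b = 0" by (simp add: zsm_mult)
      moreover have "int n * int K * j * int N \<noteq> 0" using n K0 m j unfolding N_def by simp
      ultimately have "add_finite_order b" by (rule zsm_torsion)
      then show False using b by blast
    qed
    have "nsm p c \<in> F" using jf ay j0 by simp
    then show False using K1 unfolding F_def by blast
  qed
qed

end
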